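(* Let $k\ge2$, let $\Pi\subsetneq\Sigma_k$ be a proper subshift, and let $T:\Pi\to\Sigma_k$ be the map constructed below. Then for every $y\in\Pi$, $\omega_{B^*}(T(y))\subseteq\Pi\subsetneq\omega_\sigma(T(y))$. In particular $T(y)\in Rec(\Sigma_k)\setminus BR(\Sigma_k)$.
   Context: $\Sigma_k=\{0,\dots,k-1\}^{\mathbb{N}}$ with metric $d(x,y)=\sum_{n\ge1}\delta(x_n,y_n)/2^n$ ($\delta(a,b)=0$ if $a=b$, $1$ otherwise) and shift $\sigma$. A subshift is a nonempty closed $\sigma$-invariant subset. A finite word $A$ is contained in $\Pi$ if it is a prefix of some point of $\Pi$. Construction of $T$: enumerate all finite words contained in $\Pi$ as $C_1,C_2,\dots$; fix a finite word $A_1$ not contained in $\Pi$; for $y\in\Pi$ let $Y_n$ be its first $n$ symbols; set $B_n=C_nY_nY_n\cdots Y_n$ ($Y_n$ repeated $|A_n|^2$ times) and $A_{n+1}=A_nB_nA_n$; $T(y)$ is the point of $\Sigma_k$ having every $A_n$ as a prefix. The construction requires $|C_n|=o(|A_n|)$ as $n\to\infty$. $N(x,U)=\{n\ge1:\sigma^nx\in U\}$; $B^*(S)=\limsup_{|I|\to\infty}|S\cap I|/|I|$ over intervals of consecutive integers; $\omega_{B^*}(x)=\{z: B^*(N(x,B_\varepsilon(z)))>0\ \forall\varepsilon>0\}$; $\omega_\sigma(x)$ is the $\omega$-limit set. $x\in Rec$ if $N(x,B_\varepsilon(x))\ne\emptyset$ for all $\varepsilon>0$; $x\in BR$ if $B^*(N(x,B_\varepsilon(x)))>0$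 for all $\varepsilon>0$. *)

theory Defs
  imports Complex_Main "HOL-Library.Landau_Symbols"
begin

text \<open>Points of the full shift are sequences indexed from 0: the paper's x_1 x_2 ...
  is represented by x 0, x 1, ...\<close>

definition fullshift :: "nat \<Rightarrow> (nat \<Rightarrow> nat) set" where
  "fullshift k = {x. \<forall>n. x n < k}"

definition shiftd :: "(nat \<Rightarrow> nat) \<Rightarrow> (nat \<Rightarrow> nat) \<Rightarrow> real" where
  "shiftd x y = (\<Sum>n. (if x n = y n then 0 else 1) / 2 ^ Suc n)"

definition shift :: "(nat \<Rightarrow> nat) \<Rightarrow> (nat \<Rightarrow> nat)" where
  "shift x = (\<lambda>n. x (Suc n))"

definition sball :: "nat \<Rightarrow> (nat \<Rightarrow> nat) \<Rightarrow> real \<Rightarrow> (nat \<Rightarrow> nat) set" where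
  "sball k z e = {x \<in> fullshift k. shiftd x z < e}"

definition subshift :: "nat \<Rightarrow> (nat \<Rightarrow> nat) set \<Rightarrow> bool" where
  "subshift k P \<longleftrightarrow> P \<noteq> {} \<and> P \<subseteq> fullshift k
     \<and> (\<forall>z \<in> fullshift k. (\<forall>e>0. \<exists>x\<in>P. shiftd x z < e) \<longrightarrow> z \<in> P)
     \<and> shift ` P \<subseteq> P"

definition is_prefix :: "nat list \<Rightarrow> (nat \<Rightarrow> nat) \<Rightarrow> bool" where
  "is_prefix w x \<longleftrightarrow> (\<forall>i < length w. x i = w ! i)"

definition contained :: "nat list \<Rightarrow> (nat \<Rightarrow> nat) set \<Rightarrow> bool" where
  "contained w P \<longleftrightarrow> (\<exists>x \<in> P. is_prefix w x)"

definition visits :: "nat \<Rightarrow> (nat \<Rightarrow> nat) \<Rightarrow> (nat \<Rightarrow> nat) set \<Rightarrow> nat set" where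
  "visits k x U = {n. n \<ge> 1 \<and> (shift ^^ n) x \<in> U}"

definition upper_banach_density :: "nat set \<Rightarrow> real" where
  "upper_banach_density S =
     (INF L \<in> {1::nat..}. SUP p \<in> {(m, l). l \<ge> L}.
        real (card (S \<inter> {fst p..<fst p + snd p})) / real (snd p))"

definition omega_B :: "nat \<Rightarrow> (nat \<Rightarrow> nat) \<Rightarrow> (nat \<Rightarrow> nat) set" where
  "omega_B k x = {z \<in> fullshift k. \<forall>e>0. upper_banach_density (visits k x (sball k z e)) > 0}"

definition omega_sigma :: "nat \<Rightarrow> (nat \<Rightarrow> nat) \<Rightarrow> (nat \<Rightarrow> nat) set" where
  "omega_sigma k x = {z \<in> fullshift k. \<forall>e>0. infinite {n. shiftd ((shift ^^ n) x) z < e}}"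

definition Rec :: "nat \<Rightarrow> (nat \<Rightarrow> nat) set" where
  "Rec k = {x \<in> fullshift k. \<forall>e>0. visits k x (sball k x e) \<noteq> {}}"

definition BR :: "nat \<Rightarrow> (nat \<Rightarrow> nat) set" where
  "BR k = {x \<in> fullshift k. \<forall>e>0. upper_banach_density (visits k x (sball k x e)) > 0}"

text \<open>The words A_n (index n \<ge> 1; the value at 0 is irrelevant):
  A_1 = A1, A_(n+1) = A_n B_n A_n with B_n = C_n Y_n^(|A_n|^2), Y_n = first n symbols of y.\<close>
primrec Aw :: "(nat \<Rightarrow> nat list) \<Rightarrow> nat list \<Rightarrow> (nat \<Rightarrow> nat) \<Rightarrow> nat \<Rightarrow> nat list" where
  "Aw C A1 y 0 = A1"
| "Aw C A1 y (Suc n) =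
     (if n = 0 then A1
      else Aw C A1 y n @ (C n @ concat (replicate ((length (Aw C A1 y n))\<^sup>2) (map y [0..<n])))
           @ Aw C A1 y n)"

definition Tmap :: "(nat \<Rightarrow> nat list) \<Rightarrow> nat list \<Rightarrow> (nat \<Rightarrow> nat) \<Rightarrow> (nat \<Rightarrow> nat)" where
  "Tmap C A1 y = (THE x. \<forall>n \<ge> 1. is_prefix (Aw C A1 y n) x)"

end

theory Submission imports Defs "HOL-Library.Infinite_Set" begin


lemma shift_pow: "(shift ^^ t) x i = x (t + i)"
  by (induction t arbitrary: i) (auto simp: shift_def)

lemma shift_pow_full: "x \<in> fullshift k \<Longrightarrow> (shift ^^ t) x \<in> fullshift k"
  by (auto simp: fullshift_def shift_pow)

lemma shiftd_summable: "summable (\<lambda>n. (if x n = y n then 0 else 1) / (2::real) ^ Suc n)"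
proof (rule summable_comparison_test[of _ "\<lambda>n. (1/2::real)^Suc n"])
  show "\<exists>N. \<forall>n\<ge>N. norm ((if x n = y n then 0 else 1) / (2::real) ^ Suc n) \<le> (1/2)^Suc n"
    by (auto simp: power_divide)
  show "summable (\<lambda>n. (1/2::real)^Suc n)"
    using summable_geometric[of "1/2::real"] by (simp add: summable_Suc_iff)
qed

lemma shiftd_ge: assumes "x i \<noteq> y i" shows "1 / 2 ^ Suc i \<le> shiftd x y"
proof -
  have "sum (\<lambda>n. (if x n = y n then 0 else 1) / (2::real) ^ Suc n) {i} \<le> shiftd x y"
    unfolding shiftd_def by (rule sum_le_suminf[OF shiftd_summable]) auto
  thus ?thesis using assms by simp
qed

lemma shiftd_lt_agree: assumes "shiftd x y < 1 / 2 ^ M" "i < M" shows "x i = y i"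
proof (rule ccontr)
  assume "x i \<noteq> y i"
  hence "1 / 2 ^ Suc i \<le> shiftd x y" by (rule shiftd_ge)
  moreover have "(1::real) / 2 ^ M \<le> 1 / 2 ^ Suc i"
    using assms(2) by (intro divide_left_mono power_increasing) auto
  ultimately show False using assms(1) by simp
qed

lemma shiftd_agree_le: assumes "\<And>i. i < M \<Longrightarrow> x i = y i" shows "shiftd x y \<le> 1 / 2 ^ M"
proof -
  let ?f = "\<lambda>n. (if x n = y n then 0 else 1) / (2::real) ^ Suc n"
  have "shiftd x y = (\<Sum>n. ?f (n + M)) + sum ?f {..<M}"
    unfolding shiftd_def by (rule suminf_split_initial_segment[OF shiftd_summable])
  also have "sum ?f {..<M} = 0" using assms by simp
  also have "(\<Sum>n. ?f (n + M)) \<le> (\<Sum>n. (1/2)^Suc M * (1/2::real)^n)"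
  proof (rule suminf_le)
    show "summable (\<lambda>n. ?f (n + M))" using summable_iff_shift[of ?f M] shiftd_summable[of x y] by blast
    show "summable (\<lambda>n. (1/2)^Suc M * (1/2::real)^n)" by (intro summable_mult summable_geometric) auto
    fix n show "?f (n + M) \<le> (1/2)^Suc M * (1/2::real)^n"
      by (auto simp: power_add power_divide mult_ac)
  qed
  also have "(\<Sum>n. (1/2)^Suc M * (1/2::real)^n) = (1/2)^Suc M * 2"
    by (subst suminf_mult) (auto simp: suminf_geometric)
  also have "\<dots> = 1 / 2 ^ M" by (simp add: power_divide)
  finally show ?thesis by simp
qed


definition good :: "nat \<Rightarrow> (nat\<Rightarrow>nat) set \<Rightarrow> nat list \<Rightarrow> nat \<Rightarrow> bool" where
  "good m P u i \<longleftrightarrow> i + m \<le> length u \<and> contained (take m (drop i u)) P"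

definition badset :: "nat \<Rightarrow> (nat\<Rightarrow>nat) set \<Rightarrow> nat list \<Rightarrow> nat set" where
  "badset m P u = {i. i < length u \<and> \<not> good m P u i}"

lemma badset_sub: "badset m P u \<subseteq> {..<length u}"
  by (auto simp: badset_def)

lemma finite_badset: "finite (badset m P u)"
  by (rule finite_subset[OF badset_sub]) simp

lemma good_append1: "good m P u i \<Longrightarrow> good m P (u @ v) i"
proof -
  assume g: "good m P u i"
  hence le: "i + m \<le> length u" by (simp add: good_def)
  have "take m (drop i (u @ v)) = take m (drop i u)" using le by simp
  thus ?thesis using g le by (simp add: good_def)
qed

lemma good_append2: "good m P v i \<Longrightarrow> good m P (u @ v) (length u + i)"
proof -
  assume g: "good m P v i"
  have "drop (length u + i) (u @ v) = drop i v" by simp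
  thus ?thesis using g by (simp add: good_def)
qed

lemma badset_append: "badset m P (u @ v) \<subseteq> badset m P u \<union> (+) (length u) ` badset m P v"
proof
  fix i assume i: "i \<in> badset m P (u @ v)"
  hence ng: "\<not> good m P (u @ v) i" and il: "i < length u + length v" by (auto simp: badset_def)
  show "i \<in> badset m P u \<union> (+) (length u) ` badset m P v"
  proof (cases "i < length u")
    case True
    have "\<not> good m P u i" using ng good_append1 by blast
    with True have "i \<in> badset m P u" by (simp add: badset_def)
    thus ?thesis by blast
  next
    case False
    then obtain i' where i': "i = length u + i'" by (metis le_iff_add not_less)
    have "\<not> good m P v i'" using ng good_append2 i' by blast
    moreover have "i' < length v" using il i' by simp
    ultimately have "i' \<in> badset m P v" by (simp add: badset_def)
    thus ?thesis using i' by blast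
  qed
qed
lemma factor_contained:
  assumes "shift ` P \<subseteq> P" "contained u P" "i + m \<le> length u"
  shows "contained (take m (drop i u)) P"
proof -
  obtain x where x: "x \<in> P" "is_prefix u x" using assms(2) by (auto simp: contained_def)
  have "(shift ^^ i) x \<in> P"
  proof (induction i)
    case (Suc i) thus ?case using assms(1) by auto
  qed (use x in auto)
  moreover have "is_prefix (take m (drop i u)) ((shift ^^ i) x)"
    using x(2) assms(3) by (auto simp: is_prefix_def shift_pow)
  ultimately show ?thesis by (auto simp: contained_def)
qed

lemma badset_contained:
  assumes "shift ` P \<subseteq> P" "contained u P"
  shows "badset m P u \<subseteq> {i. i < length u \<and> length u < i + m}"
  using factor_contained[OF assms] by (auto simp: badset_def good_def)

lemma badset_rep:
  assumes "0 < length Y" "badset m P Y \<subseteq> {i. length Y < i + m}"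
  shows "badset m P (concat (replicate N Y)) \<subseteq> {i. length Y < i mod length Y + m}"
proof (induction N)
  case 0 thus ?case by (simp add: badset_def)
next
  case (Suc N)
  have "badset m P (concat (replicate (Suc N) Y)) \<subseteq>
        badset m P Y \<union> (+) (length Y) ` badset m P (concat (replicate N Y))"
    using badset_append[of m P Y "concat (replicate N Y)"] by simp
  also have "\<dots> \<subseteq> {i. length Y < i mod length Y + m}"
  proof -
    have "badset m P Y \<subseteq> {i. length Y < i mod length Y + m}"
    proof
      fix x assume "x \<in> badset m P Y"
      hence "x < length Y" "length Y < x + m" using assms(2) badset_sub[of m P Y] by auto
      thus "x \<in> {i. length Y < i mod length Y + m}" by simp
    qed
    moreover have "(+) (length Y) ` badset m P (concat (replicate N Y)) \<subseteq> {i. length Y < i mod length Y + m}"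
      using Suc.IH by auto
    ultimately show ?thesis by blast
  qed
  finally show ?case .
qed

lemma cnt_shift: fixes L :: nat shows "card (((+) L ` S) \<inter> {a..<b}) = card (S \<inter> {a - L..<b - L})"
proof -
  have "((+) L ` S) \<inter> {a..<b} = (+) L ` (S \<inter> {a - L..<b - L})"
  proof (intro equalityI subsetI)
    fix z assume "z \<in> ((+) L ` S) \<inter> {a..<b}"
    then obtain x where "x\<in>S" "z = L + x" "a \<le> L+x" "L+x<b" by auto
    moreover have "a - L \<le> x" using \<open>a \<le> L+x\<close> by arith
    moreover have "x < b - L" using \<open>L+x<b\<close> by arith
    ultimately have "x \<in> S \<inter> {a - L..<b - L}" by simp
    thus "z \<in> (+) L ` (S \<inter> {a - L..<b - L})" using \<open>z = L + x\<close> by blast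
  next
    fix z assume "z \<in> (+) L ` (S \<inter> {a - L..<b - L})"
    then obtain x where "x\<in>S" "z = L + x" "a - L \<le> x" "x < b - L" by auto
    moreover have "a \<le> L + x" using \<open>a - L \<le> x\<close> by arith
    moreover have "L + x < b" using \<open>x < b - L\<close> by arith
    ultimately show "z \<in> ((+) L ` S) \<inter> {a..<b}" by auto
  qed
  moreover have "inj_on ((+) L) (S \<inter> {a - L..<b - L})" by (rule inj_onI) simp
  ultimately show ?thesis using card_image[of "(+) L" "S \<inter> {a - L..<b - L}"] by simp
qed


lemma per_count_short:
  assumes "0 < j" "l \<le> j"
  shows "card ({i. j < i mod j + m} \<inter> {a..<a+l}) \<le> m"
proof -
  have "inj_on (\<lambda>i. i mod j) ({i. j < i mod j + m} \<inter> {a..<a+l})"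
  proof (rule inj_onI)
    fix x y assume x: "x \<in> {i. j < i mod j + m} \<inter> {a..<a+l}" and y: "y \<in> {i. j < i mod j + m} \<inter> {a..<a+l}"
      and e: "x mod j = y mod j"
    show "x = y"
    proof (rule ccontr)
      assume "x \<noteq> y"
      then consider "x < y" | "y < x" by linarith
      thus False
      proof cases
        case 1
        hence "j dvd (y - x)" using e mod_eq_dvd_iff_nat[of x y j] by simp
        moreover have "y - x < j" "0 < y - x" using x y 1 assms by auto
        ultimately show False by (meson nat_dvd_not_less)
      next
        case 2
        hence "j dvd (x - y)" using e mod_eq_dvd_iff_nat[of y x j] by simp
        moreover have "x - y < j" "0 < x - y" using x y 2 assms by auto
        ultimately show False by (meson nat_dvd_not_less)
      qed
    qed
  qed
  hence "card ({i. j < i mod j + m} \<inter> {a..<a+l}) \<le> card {j - m..<j}"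
    by (rule card_inj_on_le) (auto simp: assms(1))
  thus ?thesis by simp
qed

lemma per_count:
  assumes "0 < j"
  shows "real (card ({i. j < i mod j + m} \<inter> {a..<a+l})) \<le> real m * l / j + m"
proof (induction l arbitrary: a rule: less_induct)
  case (less l)
  show ?case
  proof (cases "l \<le> j")
    case True
    hence "real (card ({i. j < i mod j + m} \<inter> {a..<a+l})) \<le> m" using per_count_short[OF assms] by simp
    moreover have "0 \<le> real m * l / j" by simp
    ultimately show ?thesis by linarith
  next
    case False
    let ?S = "{i. j < i mod j + m}"
    have split: "?S \<inter> {a..<a+l} = (?S \<inter> {a..<a+j}) \<union> (?S \<inter> {a+j..<(a+j)+(l-j)})"
      using False by auto
    have "card (?S \<inter> {a..<a+l}) \<le> card (?S \<inter> {a..<a+j}) + card (?S \<inter> {a+j..<(a+j)+(l-j)})"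
      unfolding split by (rule card_Un_le)
    hence "real (card (?S \<inter> {a..<a+l})) \<le> real (card (?S \<inter> {a..<a+j})) + real (card (?S \<inter> {a+j..<(a+j)+(l-j)}))"
      by linarith
    also have "\<dots> \<le> m + (real m * (l - j) / j + m)"
      using per_count_short[OF assms order_refl, of m a] less[of "l - j" "a + j"] False assms by simp
    also have "\<dots> = real m * l / j + m"
      using False assms by (simp add: field_simps of_nat_diff)
    finally show ?thesis .
  qed
qed



definition Inv :: "real \<Rightarrow> real \<Rightarrow> nat \<Rightarrow> nat set \<Rightarrow> bool" where
 "Inv \<alpha> \<beta> L S \<longleftrightarrow> S \<subseteq> {..<L} \<and> real (card S) \<le> \<alpha> * L
   \<and> (\<forall>b. real (card (S \<inter> {..<b})) \<le> \<alpha> * b + \<beta>)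
   \<and> (\<forall>a b. real (card (S \<inter> {a..<b})) \<le> \<alpha> * real (L - a) + \<beta>)
   \<and> (\<forall>a b. real (card (S \<inter> {a..<b})) \<le> \<alpha> * real (b - a) + 2 * \<beta>)"

lemma card_Un_Int_le: "finite A \<Longrightarrow> finite B \<Longrightarrow>
   real (card ((A \<union> B) \<inter> I)) \<le> real (card (A \<inter> I)) + real (card (B \<inter> I))"
proof -
  have "card ((A \<union> B) \<inter> I) \<le> card (A \<inter> I) + card (B \<inter> I)"
    unfolding Int_Un_distrib2 by (rule card_Un_le)
  thus ?thesis by linarith
qed

lemma card_mono_real: "finite B \<Longrightarrow> A \<subseteq> B \<Longrightarrow> real (card A) \<le> real (card B)"
  by (simp add: card_mono)

lemma Inv_mono: assumes "Inv \<alpha> \<beta> L S" "S' \<subseteq> S" shows "Inv \<alpha> \<beta> L S'"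
proof -
  have fin: "finite S" using assms(1) unfolding Inv_def using finite_subset[of S "{..<L}"] by simp
  have m: "real (card (S' \<inter> I)) \<le> real (card (S \<inter> I))" for I
    using fin assms(2) by (intro card_mono_real) auto
  show ?thesis using assms m[of "{..<_}"] m[of "{_..<_}"] card_mono_real[OF fin assms(2)]
    unfolding Inv_def by (meson order_trans subset_trans)
qed

lemma Inv_empty: "0 \<le> \<alpha> \<Longrightarrow> 0 \<le> \<beta> \<Longrightarrow> Inv \<alpha> \<beta> 0 {}"
  by (simp add: Inv_def)

lemma Inv_unit:
  assumes "S \<subseteq> {..<L}" "real (card S) \<le> \<alpha> * L" "0 \<le> \<beta>"
    and "\<And>a b. real (card (S \<inter> {a..<b})) \<le> \<alpha> * real (b - a) + \<beta>"
  shows "Inv \<alpha> \<beta> L S"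
proof -
  have fin: "finite S" using assms(1) finite_subset[of S "{..<L}"] by simp
  have pre: "real (card (S \<inter> {..<b})) \<le> \<alpha> * b + \<beta>" for b
    using assms(4)[of 0 b] by (simp add: atLeast0LessThan)
  have suf: "real (card (S \<inter> {a..<b})) \<le> \<alpha> * real (L - a) + \<beta>" for a b
  proof -
    have "real (card (S \<inter> {a..<b})) \<le> real (card (S \<inter> {a..<L}))"
      using fin assms(1) by (intro card_mono_real) auto
    also have "\<dots> \<le> \<alpha> * real (L - a) + \<beta>" by (rule assms(4))
    finally show ?thesis .
  qed
  have gen: "real (card (S \<inter> {a..<b})) \<le> \<alpha> * real (b - a) + 2 * \<beta>" for a b
    using assms(4)[of a b] assms(3) by linarith
  show ?thesis unfolding Inv_def using assms(1,2) pre suf gen by blast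
qed

lemma Inv_append:
  assumes a0: "0 \<le> \<alpha>" and b0: "0 \<le> \<beta>" and I1: "Inv \<alpha> \<beta> L1 S1" and I2: "Inv \<alpha> \<beta> L2 S2"
  shows "Inv \<alpha> \<beta> (L1 + L2) (S1 \<union> (+) L1 ` S2)"
proof -
  let ?T = "(+) L1 ` S2"
  have s1: "S1 \<subseteq> {..<L1}" and f1: "real (card S1) \<le> \<alpha> * L1"
    and p1: "\<And>b. real (card (S1 \<inter> {..<b})) \<le> \<alpha> * b + \<beta>"
    and u1: "\<And>a b. real (card (S1 \<inter> {a..<b})) \<le> \<alpha> * real (L1 - a) + \<beta>"
    and g1: "\<And>a b. real (card (S1 \<inter> {a..<b})) \<le> \<alpha> * real (b - a) + 2 * \<beta>"
    using I1 unfolding Inv_def by blast+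
  have s2: "S2 \<subseteq> {..<L2}" and f2: "real (card S2) \<le> \<alpha> * L2"
    and p2: "\<And>b. real (card (S2 \<inter> {..<b})) \<le> \<alpha> * b + \<beta>"
    and u2: "\<And>a b. real (card (S2 \<inter> {a..<b})) \<le> \<alpha> * real (L2 - a) + \<beta>"
    and g2: "\<And>a b. real (card (S2 \<inter> {a..<b})) \<le> \<alpha> * real (b - a) + 2 * \<beta>"
    using I2 unfolding Inv_def by blast+
  have fin1: "finite S1" using s1 finite_subset[of S1 "{..<L1}"] by simp
  have fin2: "finite S2" using s2 finite_subset[of S2 "{..<L2}"] by simp
  have finT: "finite ?T" using fin2 by simp
  have cT: "card (?T \<inter> {a..<b}) = card (S2 \<inter> {a - L1..<b - L1})" for a b by (rule cnt_shift)
  have cTle: "real (card (?T \<inter> I)) \<le> real (card S2)" for I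
  proof -
    have "card (?T \<inter> I) \<le> card ?T" using finT by (intro card_mono) auto
    also have "\<dots> = card S2" by (simp add: card_image)
    finally show ?thesis by simp
  qed
  have cS1le: "real (card (S1 \<inter> I)) \<le> real (card S1)" for I
    using fin1 by (intro card_mono_real) auto
  have T_low: "?T \<inter> {..<b} = {}" if "b \<le> L1" for b using that by auto
  have T_low2: "?T \<inter> {a..<b} = {}" if "b \<le> L1" for a b using that by auto
  have S1_high: "S1 \<inter> {a..<b} = {}" if "L1 \<le> a" for a b using that s1 by auto
  have U: "real (card ((S1 \<union> ?T) \<inter> I)) \<le> real (card (S1 \<inter> I)) + real (card (?T \<inter> I))" for I
    by (rule card_Un_Int_le[OF fin1 finT])
  have sub: "S1 \<union> ?T \<subseteq> {..<L1 + L2}" using s1 s2 by auto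
  have full: "real (card (S1 \<union> ?T)) \<le> \<alpha> * real (L1 + L2)"
  proof -
    have "card (S1 \<union> ?T) \<le> card S1 + card ?T" by (rule card_Un_le)
    also have "card ?T = card S2" by (simp add: card_image)
    finally have "real (card (S1 \<union> ?T)) \<le> real (card S1) + real (card S2)" by linarith
    thus ?thesis using f1 f2 by (simp add: distrib_left)
  qed
  have pre: "real (card ((S1 \<union> ?T) \<inter> {..<b})) \<le> \<alpha> * b + \<beta>" for b
  proof (cases "b \<le> L1")
    case True thus ?thesis using U[of "{..<b}"] p1[of b] T_low[OF True] by simp
  next
    case False
    have "card (?T \<inter> {..<b}) = card (?T \<inter> {0..<b})" by (simp add: atLeast0LessThan)
    also have "\<dots> = card (S2 \<inter> {..<b - L1})" using cT[of 0 b] by (simp add: atLeast0LessThan)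
    finally have "real (card (?T \<inter> {..<b})) \<le> \<alpha> * real (b - L1) + \<beta>" using p2[of "b - L1"] by simp
    moreover have "real (b - L1) = real b - real L1" using False by simp
    ultimately show ?thesis using U[of "{..<b}"] cS1le[of "{..<b}"] f1 by (simp add: algebra_simps)
  qed
  have suf: "real (card ((S1 \<union> ?T) \<inter> {a..<b})) \<le> \<alpha> * real (L1 + L2 - a) + \<beta>" for a b
  proof (cases "a \<le> L1")
    case True
    have "real (L1 + L2 - a) = real (L1 - a) + real L2" using True by simp
    thus ?thesis using U[of "{a..<b}"] u1[of a b] cTle[of "{a..<b}"] f2 by (simp add: algebra_simps)
  next
    case False
    have "L2 - (a - L1) = L1 + L2 - a" using False by simp
    thus ?thesis using U[of "{a..<b}"] u2[of "a - L1" "b - L1"] cT[of a b] S1_high[of a b] False by simp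
  qed
  have gen: "real (card ((S1 \<union> ?T) \<inter> {a..<b})) \<le> \<alpha> * real (b - a) + 2 * \<beta>" for a b
  proof -
    consider "b \<le> L1" | "L1 \<le> a" | "a < L1" "L1 < b" by linarith
    thus ?thesis
    proof cases
      case 1 thus ?thesis using U[of "{a..<b}"] g1[of a b] T_low2[OF 1] by simp
    next
      case 2
      have "b - L1 - (a - L1) = b - a" using 2 by simp
      thus ?thesis using U[of "{a..<b}"] g2[of "a - L1" "b - L1"] cT[of a b] S1_high[OF 2] by simp
    next
      case 3
      have e: "a - L1 = 0" using 3 by simp
      have "real (card (?T \<inter> {a..<b})) \<le> \<alpha> * real (b - L1) + \<beta>"
        using cT[of a b] p2[of "b - L1"] by (simp add: e atLeast0LessThan)
      moreover have "real (b - a) = real (L1 - a) + real (b - L1)" using 3 by simp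
      ultimately show ?thesis using U[of "{a..<b}"] u1[of a b] by (simp add: algebra_simps)
    qed
  qed
  show ?thesis unfolding Inv_def using sub full pre suf gen by blast
qed



definition Bw :: "(nat \<Rightarrow> nat list) \<Rightarrow> nat list \<Rightarrow> (nat \<Rightarrow> nat) \<Rightarrow> nat \<Rightarrow> nat list" where
  "Bw C A1 y n = C n @ concat (replicate ((length (Aw C A1 y n))\<^sup>2) (map y [0..<n]))"

lemma Aw_Suc: "1 \<le> n \<Longrightarrow> Aw C A1 y (Suc n) = Aw C A1 y n @ Bw C A1 y n @ Aw C A1 y n"
  by (simp add: Bw_def)

lemma Aw_one: "Aw C A1 y (Suc 0) = A1" by simp

lemma Aw_len_ge: assumes "A1 \<noteq> []" shows "n \<le> length (Aw C A1 y n)"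
proof (induction n)
  case (Suc n)
  show ?case
  proof (cases "n = 0")
    case True thus ?thesis using assms by (simp add: Suc_le_eq)
  next
    case False
    hence "length (Aw C A1 y (Suc n)) = 2 * length (Aw C A1 y n) + length (Bw C A1 y n)"
      using Aw_Suc[of n] by simp
    thus ?thesis using Suc False by linarith
  qed
qed simp

lemma Aw_prefix: assumes "n \<le> n'" shows "\<exists>s. Aw C A1 y n' = Aw C A1 y n @ s"
  using assms
proof (induction n' rule: dec_induct)
  case (step m)
  then obtain s where s: "Aw C A1 y m = Aw C A1 y n @ s" by blast
  show ?case
  proof (cases "m = 0")
    case True thus ?thesis using step by simp
  next
    case False
    thus ?thesis using Aw_Suc[of m C A1 y] s by auto
  qed
qed simp

lemma Aw_len_mono: "n \<le> n' \<Longrightarrow> length (Aw C A1 y n) \<le> length (Aw C A1 y n')"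
  using Aw_prefix[of n n' C A1 y] by auto

lemma Aw_nth: assumes "n \<le> n'" "i < length (Aw C A1 y n)"
  shows "Aw C A1 y n' ! i = Aw C A1 y n ! i"
  using Aw_prefix[OF assms(1), of C A1 y] assms(2) by (auto simp: nth_append)

definition Xp :: "(nat \<Rightarrow> nat list) \<Rightarrow> nat list \<Rightarrow> (nat \<Rightarrow> nat) \<Rightarrow> nat \<Rightarrow> nat" where
  "Xp C A1 y = (\<lambda>i. Aw C A1 y (Suc i) ! i)"

lemma Xp_prefix: assumes "A1 \<noteq> []" shows "is_prefix (Aw C A1 y n) (Xp C A1 y)"
  unfolding is_prefix_def
proof (intro allI impI)
  fix i assume i: "i < length (Aw C A1 y n)"
  have i2: "i < length (Aw C A1 y (Suc i))" using Aw_len_ge[OF assms, of "Suc i" C y] by simp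
  have "Xp C A1 y i = Aw C A1 y (max n (Suc i)) ! i"
    unfolding Xp_def using Aw_nth[OF _ i2, of "max n (Suc i)"] by simp
  also have "\<dots> = Aw C A1 y n ! i" using Aw_nth[OF _ i, of "max n (Suc i)"] by simp
  finally show "Xp C A1 y i = Aw C A1 y n ! i" .
qed

lemma Tmap_eq: assumes "A1 \<noteq> []" shows "Tmap C A1 y = Xp C A1 y"
  unfolding Tmap_def
proof (rule the_equality)
  show "\<forall>n\<ge>1. is_prefix (Aw C A1 y n) (Xp C A1 y)" using Xp_prefix[OF assms] by blast
  fix x assume x: "\<forall>n\<ge>1. is_prefix (Aw C A1 y n) x"
  show "x = Xp C A1 y"
  proof
    fix i
    have i2: "i < length (Aw C A1 y (Suc i))" using Aw_len_ge[OF assms, of "Suc i" C y] by simp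
    thus "x i = Xp C A1 y i" using x[rule_format, of "Suc i"] by (simp add: is_prefix_def Xp_def)
  qed
qed

lemma Xp_window: assumes "A1 \<noteq> []" "t + M \<le> length (Aw C A1 y n)"
  shows "take M (drop t (Aw C A1 y n)) = map (\<lambda>i. Xp C A1 y (t + i)) [0..<M]"
proof (rule nth_equalityI)
  show "length (take M (drop t (Aw C A1 y n))) = length (map (\<lambda>i. Xp C A1 y (t + i)) [0..<M])"
    using assms(2) by simp
  fix i assume "i < length (take M (drop t (Aw C A1 y n)))"
  hence i: "i < M" using assms(2) by simp
  thus "take M (drop t (Aw C A1 y n)) ! i = map (\<lambda>i. Xp C A1 y (t + i)) [0..<M] ! i"
    using Xp_prefix[OF assms(1), of C y n] assms(2) by (simp add: is_prefix_def)
qed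

lemma Aw_decomp:
  assumes "1 \<le> n0" "n0 \<le> n"
  shows "\<exists>js. set js \<subseteq> {n0..<n} \<and>
     Aw C A1 y n = concat (map (\<lambda>j. Aw C A1 y n0 @ Bw C A1 y j) js) @ Aw C A1 y n0"
  using assms(2)
proof (induction n rule: dec_induct)
  case base
  show ?case by (rule exI[of _ "[]"]) simp
next
  case (step m)
  then obtain js where js: "set js \<subseteq> {n0..<m}"
    "Aw C A1 y m = concat (map (\<lambda>j. Aw C A1 y n0 @ Bw C A1 y j) js) @ Aw C A1 y n0" by blast
  have "Aw C A1 y (Suc m) = Aw C A1 y m @ Bw C A1 y m @ Aw C A1 y m"
    using Aw_Suc[of m] step assms by simp
  also have "\<dots> = concat (map (\<lambda>j. Aw C A1 y n0 @ Bw C A1 y j) (js @ [m] @ js)) @ Aw C A1 y n0"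
    by (simp add: js(2))
  finally show ?case using js(1) step by (intro exI[of _ "js @ [m] @ js"]) auto
qed



lemma unit_badset:
  assumes sh: "shift ` P \<subseteq> P" and cC: "contained Cw P" and cY: "contained Y P" and j: "length Y = j" "0 < j"
  shows "badset m P (A @ Cw @ concat (replicate N Y)) \<subseteq>
     {..<length A} \<union> (+) (length A) ` {i. i < length Cw \<and> length Cw < i + m}
       \<union> (+) (length A + length Cw) ` {i. j < i mod j + m}"
proof -
  have bY: "badset m P Y \<subseteq> {i. length Y < i + m}" using badset_contained[OF sh cY] by auto
  have bR: "badset m P (concat (replicate N Y)) \<subseteq> {i. j < i mod j + m}"
    using badset_rep[OF _ bY, of N] j by simp
  have bCR: "badset m P (Cw @ concat (replicate N Y)) \<subseteq>
       {i. i < length Cw \<and> length Cw < i + m} \<union> (+) (length Cw) ` {i. j < i mod j + m}"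
    using badset_append[of m P Cw "concat (replicate N Y)"] badset_contained[OF sh cC, of m] bR by blast
  have "badset m P (A @ Cw @ concat (replicate N Y)) \<subseteq> badset m P A \<union> (+) (length A) ` badset m P (Cw @ concat (replicate N Y))"
    by (rule badset_append)
  also have "\<dots> \<subseteq> {..<length A} \<union> (+) (length A) ` ({i. i < length Cw \<and> length Cw < i + m} \<union> (+) (length Cw) ` {i. j < i mod j + m})"
    using badset_sub[of m P A] bCR by blast
  also have "\<dots> = {..<length A} \<union> (+) (length A) ` {i. i < length Cw \<and> length Cw < i + m}
       \<union> (+) (length A + length Cw) ` {i. j < i mod j + m}"
    by (auto simp: image_Un image_image add.assoc)
  finally show ?thesis .
qed

lemma unit_count:
  assumes sh: "shift ` P \<subseteq> P" and cC: "contained Cw P" and cY: "contained Y P" and j: "length Y = j" "0 < j"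
  shows "real (card (badset m P (A @ Cw @ concat (replicate N Y)) \<inter> {p..<q})) \<le>
     real (length A) + 2 * m + real m * real (q - p) / j"
proof -
  let ?Z = "{i. i < length Cw \<and> length Cw < i + m}"
  let ?Per = "{i. j < i mod j + m}"
  let ?a = "length A" and ?c = "length Cw"
  let ?I = "{p..<q}"
  have sub: "badset m P (A @ Cw @ concat (replicate N Y)) \<inter> ?I \<subseteq>
     ({..<?a} \<inter> ?I \<union> ((+) ?a ` ?Z) \<inter> ?I) \<union> ((+) (?a + ?c) ` ?Per) \<inter> ?I"
    using unit_badset[OF assms, of m A N] by blast
  have finZ: "finite ?Z" by (rule finite_subset[of _ "{..<?c}"]) auto
  have c1: "card ({..<?a} \<inter> ?I) \<le> ?a"
    by (rule order_trans[OF card_mono[of "{..<?a}"]]) auto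
  have c2: "card (((+) ?a ` ?Z) \<inter> ?I) \<le> m"
  proof -
    have "card (((+) ?a ` ?Z) \<inter> ?I) \<le> card ((+) ?a ` ?Z)" using finZ by (intro card_mono) auto
    also have "\<dots> \<le> card ?Z" by (rule card_image_le[OF finZ])
    also have "\<dots> \<le> card {?c - m..<?c}" by (intro card_mono) auto
    finally show ?thesis by simp
  qed
  have c3: "real (card (((+) (?a + ?c) ` ?Per) \<inter> ?I)) \<le> real m * real (q - p) / j + m"
  proof -
    let ?q0 = "p - (?a + ?c)" and ?l = "(q - (?a + ?c)) - (p - (?a + ?c))"
    have "card (((+) (?a + ?c) ` ?Per) \<inter> ?I) = card (?Per \<inter> {?q0..<?q0 + ?l})"
    proof -
      have gen: "{u..<v} = {u..<u + (v - u)}" for u v :: nat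
        by (cases "u \<le> v") simp_all
      have e: "{?q0..<q - (?a + ?c)} = {?q0..<?q0 + ?l}" by (rule gen)
      show ?thesis using cnt_shift[of "?a + ?c" ?Per p q] unfolding e .
    qed
    also have "real \<dots> \<le> real m * ?l / j + m" by (rule per_count[OF j(2)])
    also have "real m * ?l / j \<le> real m * real (q - p) / j"
      using j(2) by (intro divide_right_mono mult_left_mono) auto
    finally show ?thesis by simp
  qed
  have fin3: "finite (((+) (?a + ?c) ` ?Per) \<inter> ?I)" by simp
  have "card (badset m P (A @ Cw @ concat (replicate N Y)) \<inter> ?I) \<le>
        card ({..<?a} \<inter> ?I \<union> ((+) ?a ` ?Z) \<inter> ?I \<union> ((+) (?a + ?c) ` ?Per) \<inter> ?I)"
    using fin3 finZ by (intro card_mono[OF _ sub]) auto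
  also have "\<dots> \<le> card ({..<?a} \<inter> ?I \<union> ((+) ?a ` ?Z) \<inter> ?I) + card (((+) (?a + ?c) ` ?Per) \<inter> ?I)"
    by (rule card_Un_le)
  also have "card ({..<?a} \<inter> ?I \<union> ((+) ?a ` ?Z) \<inter> ?I) \<le> card ({..<?a} \<inter> ?I) + card (((+) ?a ` ?Z) \<inter> ?I)"
    by (rule card_Un_le)
  finally have "real (card (badset m P (A @ Cw @ concat (replicate N Y)) \<inter> ?I)) \<le>
     real (card ({..<?a} \<inter> ?I)) + real (card (((+) ?a ` ?Z) \<inter> ?I)) + real (card (((+) (?a + ?c) ` ?Per) \<inter> ?I))"
    by linarith
  thus ?thesis using c1 c2 c3 by linarith
qed



context
  fixes P :: "(nat \<Rightarrow> nat) set" and C :: "nat \<Rightarrow> nat list" and A1 :: "nat list" and y :: "nat \<Rightarrow> nat"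
    and m :: nat and \<alpha> :: real and n0 :: nat
  assumes sh: "shift ` P \<subseteq> P" and cC: "\<And>j. 1 \<le> j \<Longrightarrow> contained (C j) P"
    and cY: "\<And>j. contained (map y [0..<j]) P" and A1ne: "A1 \<noteq> []"
    and apos: "0 < \<alpha>" and n0: "1 \<le> n0" and big: "real (3*m+3) \<le> \<alpha> * n0"
begin

lemma unit_Inv:
  assumes j: "n0 \<le> j"
  shows "Inv \<alpha> (real (length (Aw C A1 y n0)) + 2 * m)
     (length (Aw C A1 y n0 @ Bw C A1 y j)) (badset m P (Aw C A1 y n0 @ Bw C A1 y j))"
proof -
  let ?A = "Aw C A1 y n0" and ?Y = "map y [0..<j]" and ?N = "(length (Aw C A1 y j))\<^sup>2"
  let ?U = "?A @ C j @ concat (replicate ?N ?Y)"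
  let ?a = "real (length ?A)" and ?L = "length ?U"
  have U: "?A @ Bw C A1 y j = ?U" by (simp add: Bw_def)
  have j0: "0 < j" using j n0 by simp
  have cCj: "contained (C j) P" using cC j n0 by simp
  have aj: "real (3*m+3) \<le> \<alpha> * j"
    using big j apos by (smt (verit, best) mult_left_mono of_nat_mono)
  have mj: "real m \<le> \<alpha> * j" using aj by simp
  have cnt: "real (card (badset m P ?U \<inter> {p..<q})) \<le> ?a + 2 * m + real m * real (q - p) / j" for p q
    using unit_count[OF sh cCj cY[of j] _ j0, of m ?A ?N p q] by simp
  have G: "real (card (badset m P ?U \<inter> {p..<q})) \<le> \<alpha> * real (q - p) + (?a + 2 * m)" for p q
  proof -
    have "real m * real (q - p) / j \<le> \<alpha> * real (q - p)"
    proof -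
      have "real m * real (q - p) \<le> (\<alpha> * j) * real (q - p)" using mj by (intro mult_right_mono) auto
      thus ?thesis using j0 by (simp add: divide_le_eq algebra_simps)
    qed
    thus ?thesis using cnt[of p q] by linarith
  qed
  have Npos: "length ?A \<le> ?N" and N1: "1 \<le> ?N"
  proof -
    have "length ?A \<le> length (Aw C A1 y j)" using Aw_len_mono[OF j] .
    also have "\<dots> \<le> ?N" using le_square[of "length (Aw C A1 y j)"] by (simp add: power2_eq_square)
    finally show "length ?A \<le> ?N" .
    have "1 \<le> length ?A" using Aw_len_ge[OF A1ne, of n0 C y] n0 by simp
    thus "1 \<le> ?N" using \<open>length ?A \<le> ?N\<close> by (rule order_trans)
  qed
  have LN: "real ?N * j \<le> ?L" by (simp add: length_concat sum_list_replicate)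
  have full: "real (card (badset m P ?U)) \<le> \<alpha> * ?L"
  proof -
    have "badset m P ?U \<inter> {0..<?L} = badset m P ?U"
      using badset_sub[of m P ?U] by (simp add: atLeast0LessThan Int_absorb2)
    hence c0: "real (card (badset m P ?U)) \<le> ?a + 2 * m + real m * ?L / j" using cnt[of 0 ?L] by simp
    have N1r: "1 \<le> real ?N" using N1 by (metis of_nat_1 of_nat_le_iff)
    have h1: "real m * 1 \<le> real m * real ?N" by (rule mult_left_mono[OF N1r]) simp
    have h2: "?a \<le> real ?N" using Npos by simp
    have h3: "(2*m+3)*real ?N = 2*(real m*real ?N) + 3*real ?N" by (simp add: algebra_simps)
    have "(2 * m + 3 * ?a) \<le> (2*m + 3) * real ?N" using h1 h2 h3 by linarith
    hence "(?a + 2 * m) * j \<le> (2*m + 3) * real ?N * j"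
      using j0 by (intro mult_right_mono) auto
    also have "\<dots> \<le> (2*m+3) * ?L" using LN by (simp add: mult.assoc mult_left_mono)
    also have "\<dots> = (real (3*m+3) - m) * ?L" by simp
    also have "\<dots> \<le> (\<alpha> * j - m) * ?L" using aj by (intro mult_right_mono) auto
    finally have "(?a + 2 * m) * j + m * ?L \<le> \<alpha> * ?L * j" by (simp add: algebra_simps)
    hence "?a + 2 * m + real m * ?L / j \<le> \<alpha> * ?L"
      using j0 by (simp add: field_simps)
    thus ?thesis using c0 by linarith
  qed
  have "Inv \<alpha> (?a + 2 * m) ?L (badset m P ?U)"
    by (rule Inv_unit[OF badset_sub full _ G]) simp
  thus ?thesis by (simp only: U)
qed

lemma concat_Inv:
  assumes "set js \<subseteq> {n0..}"
  shows "Inv \<alpha> (real (length (Aw C A1 y n0)) + 2 * m)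
     (length (concat (map (\<lambda>j. Aw C A1 y n0 @ Bw C A1 y j) js)))
     (badset m P (concat (map (\<lambda>j. Aw C A1 y n0 @ Bw C A1 y j) js)))"
  using assms
proof (induction js)
  case Nil thus ?case using apos by (simp add: badset_def Inv_empty)
next
  case (Cons j js)
  let ?u = "Aw C A1 y n0 @ Bw C A1 y j" and ?w = "concat (map (\<lambda>j. Aw C A1 y n0 @ Bw C A1 y j) js)"
  have IA: "Inv \<alpha> (real (length (Aw C A1 y n0)) + 2 * m) (length ?u + length ?w)
      (badset m P ?u \<union> (+) (length ?u) ` badset m P ?w)"
    using Cons unit_Inv apos by (intro Inv_append) auto
  have "Inv \<alpha> (real (length (Aw C A1 y n0)) + 2 * m) (length ?u + length ?w) (badset m P (?u @ ?w))"
    by (rule Inv_mono[OF IA badset_append])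
  thus ?case by (simp add: add.assoc)
qed

lemma Aw_count:
  assumes "n0 \<le> n"
  shows "real (card (badset m P (Aw C A1 y n) \<inter> {p..<q})) \<le>
     \<alpha> * real (q - p) + 2 * (real (length (Aw C A1 y n0)) + 2 * m) + real (length (Aw C A1 y n0))"
proof -
  obtain js where js: "set js \<subseteq> {n0..<n}"
    "Aw C A1 y n = concat (map (\<lambda>j. Aw C A1 y n0 @ Bw C A1 y j) js) @ Aw C A1 y n0"
    using Aw_decomp[OF n0 assms] by blast
  let ?w = "concat (map (\<lambda>j. Aw C A1 y n0 @ Bw C A1 y j) js)"
  let ?b = "real (length (Aw C A1 y n0)) + 2 * m"
  have "set js \<subseteq> {n0..}" using js(1) by auto
  hence I: "Inv \<alpha> ?b (length ?w) (badset m P ?w)" by (rule concat_Inv)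
  have g: "real (card (badset m P ?w \<inter> {p..<q})) \<le> \<alpha> * real (q - p) + 2 * ?b"
    using I unfolding Inv_def by blast
  have sub: "badset m P (Aw C A1 y n) \<subseteq> badset m P ?w \<union> (+) (length ?w) ` badset m P (Aw C A1 y n0)"
    unfolding js(2) by (rule badset_append)
  have "card (badset m P (Aw C A1 y n) \<inter> {p..<q}) \<le> card ((badset m P ?w \<inter> {p..<q}) \<union> (+) (length ?w) ` badset m P (Aw C A1 y n0))"
    using sub finite_badset by (intro card_mono) auto
  also have "\<dots> \<le> card (badset m P ?w \<inter> {p..<q}) + card ((+) (length ?w) ` badset m P (Aw C A1 y n0))"
    by (rule card_Un_le)
  also have "card ((+) (length ?w) ` badset m P (Aw C A1 y n0)) \<le> card (badset m P (Aw C A1 y n0))"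
    by (rule card_image_le[OF finite_badset])
  also have "card (badset m P (Aw C A1 y n0)) \<le> length (Aw C A1 y n0)"
    using card_mono[OF finite_lessThan badset_sub[of m P "Aw C A1 y n0"]] by simp
  finally show ?thesis using g by linarith
qed

end

lemma pow_small: assumes "(0::real) < e" shows "\<exists>M. 1 / 2 ^ M < e"
proof -
  obtain M where "1 / e < 2 ^ M" using real_arch_pow[of 2 "1/e"] by auto
  hence "1 / 2 ^ M < e" using assms by (simp add: field_simps)
  thus ?thesis by blast
qed

lemma contained_lt: assumes "contained w P" "P \<subseteq> fullshift k" shows "set w \<subseteq> {..<k}"
proof
  fix c assume "c \<in> set w"
  then obtain i where i: "i < length w" "w ! i = c" by (auto simp: in_set_conv_nth)
  obtain x where x: "x \<in> P" "is_prefix w x" using assms(1) by (auto simp: contained_def)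
  have "x i = c" using x(2) i by (simp add: is_prefix_def)
  moreover have "x i < k" using x(1) assms(2) by (auto simp: fullshift_def)
  ultimately show "c \<in> {..<k}" by simp
qed

lemma set_Aw:
  assumes "set A1 \<subseteq> {..<k}" "\<And>j. 1 \<le> j \<Longrightarrow> set (C j) \<subseteq> {..<k}" "\<And>i. y i < k"
  shows "set (Aw C A1 y n) \<subseteq> {..<k}"
proof (induction n)
  case 0 thus ?case using assms(1) by simp
next
  case (Suc n)
  show ?case
  proof (cases "n = 0")
    case True thus ?thesis using assms(1) by simp
  next
    case False
    hence "set (C n) \<subseteq> {..<k}" using assms(2) by simp
    moreover have "set (map y [0..<n]) \<subseteq> {..<k}" using assms(3) by auto
    ultimately show ?thesis using Suc False by (auto simp: Aw_Suc Bw_def)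
  qed
qed

lemma Xp_occ_C:
  assumes "A1 \<noteq> []" "1 \<le> n" "i < length (C n)"
  shows "Xp C A1 y (length (Aw C A1 y n) + i) = C n ! i"
proof -
  have "is_prefix (Aw C A1 y (Suc n)) (Xp C A1 y)" by (rule Xp_prefix[OF assms(1)])
  moreover have "Aw C A1 y (Suc n) = Aw C A1 y n @ C n @ (concat (replicate ((length (Aw C A1 y n))\<^sup>2) (map y [0..<n])) @ Aw C A1 y n)"
    using Aw_Suc[OF assms(2)] by (simp add: Bw_def)
  ultimately show ?thesis using assms(3) by (simp add: is_prefix_def nth_append)
qed

lemma Xp_occ_A:
  assumes "A1 \<noteq> []" "1 \<le> n" "i < length (Aw C A1 y n)"
  shows "Xp C A1 y (length (Aw C A1 y n) + length (Bw C A1 y n) + i) = Xp C A1 y i"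
proof -
  have "is_prefix (Aw C A1 y (Suc n)) (Xp C A1 y)" by (rule Xp_prefix[OF assms(1)])
  hence "Xp C A1 y (length (Aw C A1 y n) + length (Bw C A1 y n) + i) = Aw C A1 y n ! i"
    using Aw_Suc[OF assms(2)] assms(3) by (simp add: is_prefix_def nth_append)
  also have "\<dots> = Xp C A1 y i" using Xp_prefix[OF assms(1), of C y n] assms(3) by (simp add: is_prefix_def)
  finally show ?thesis .
qed

lemma self_return:
  assumes "A1 \<noteq> []" "0 < e"
  shows "infinite {t. 1 \<le> t \<and> shiftd ((shift ^^ t) (Xp C A1 y)) (Xp C A1 y) < e}"
proof -
  obtain M where M: "1 / 2 ^ M < e" using pow_small[OF assms(2)] by blast
  let ?x = "Xp C A1 y"
  show ?thesis unfolding infinite_nat_iff_unbounded_le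
  proof
    fix N
    let ?n = "max (max M 1) N"
    let ?t = "length (Aw C A1 y ?n) + length (Bw C A1 y ?n)"
    have an: "?n \<le> length (Aw C A1 y ?n)" by (rule Aw_len_ge[OF assms(1)])
    have "shiftd ((shift ^^ ?t) ?x) ?x \<le> 1 / 2 ^ M"
    proof (rule shiftd_agree_le)
      fix i assume "i < M"
      hence "i < length (Aw C A1 y ?n)" using an by linarith
      thus "(shift ^^ ?t) ?x i = ?x i" using Xp_occ_A[OF assms(1), of ?n i C y] by (simp add: shift_pow)
    qed
    hence "shiftd ((shift ^^ ?t) ?x) ?x < e" using M by linarith
    moreover have "N \<le> ?t" "1 \<le> ?t" using an by linarith+
    ultimately show "\<exists>t\<ge>N. t \<in> {t. 1 \<le> t \<and> shiftd ((shift ^^ t) ?x) ?x < e}" by blast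
  qed
qed


lemma ubd_le:
  assumes "1 \<le> L0" and b: "\<And>p l. L0 \<le> l \<Longrightarrow> real (card (V \<inter> {p..<p+l})) / real l \<le> c"
  shows "upper_banach_density V \<le> c"
proof -
  let ?r = "\<lambda>p::nat\<times>nat. real (card (V \<inter> {fst p..<fst p + snd p})) / real (snd p)"
  let ?F = "\<lambda>L::nat. SUP p \<in> {(m, l). l \<ge> L}. ?r p"
  have r1: "?r p \<le> 1" for p
  proof (cases "snd p = 0")
    case True thus ?thesis by simp
  next
    case False
    have "card (V \<inter> {fst p..<fst p + snd p}) \<le> card {fst p..<fst p + snd p}" by (intro card_mono) auto
    hence "real (card (V \<inter> {fst p..<fst p + snd p})) \<le> real (snd p)" by simp
    thus ?thesis using False by (simp add: divide_le_eq)
  qed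
  have r0: "0 \<le> ?r p" for p by simp
  have ba: "bdd_above (?r ` A)" for A using r1 by (intro bdd_aboveI[of _ 1]) auto
  have F0: "0 \<le> ?F L" for L
  proof -
    have "(0, L) \<in> {(m, l). l \<ge> L}" by simp
    hence "?r (0, L) \<le> ?F L" by (rule cSUP_upper[OF _ ba])
    thus ?thesis using r0[of "(0, L)"] by linarith
  qed
  have bb: "bdd_below (?F ` {1..})" using F0 by (intro bdd_belowI[of _ 0]) auto
  have "upper_banach_density V = (INF L \<in> {1..}. ?F L)" unfolding upper_banach_density_def by simp
  also have "\<dots> \<le> ?F L0" using assms(1) by (intro cINF_lower[OF bb]) simp
  also have "\<dots> \<le> c"
  proof (rule cSUP_least)
    show "{(m, l). l \<ge> L0} \<noteq> {}" by auto
    fix p assume "p \<in> {(m::nat, l). l \<ge> L0}"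
    hence "L0 \<le> snd p" by auto
    thus "?r p \<le> c" using b[of "snd p" "fst p"] by simp
  qed
  finally show ?thesis .
qed

lemma density_zero:
  assumes sh: "shift ` P \<subseteq> P" and cC: "\<And>j. 1 \<le> j \<Longrightarrow> contained (C j) P"
    and cY: "\<And>j. contained (map y [0..<j]) P" and A1ne: "A1 \<noteq> []"
    and notc: "\<not> contained (map z [0..<M]) P"
    and V: "V \<subseteq> {t. \<forall>i<M. Xp C A1 y (t + i) = z i}"
  shows "upper_banach_density V \<le> 0"
proof (rule field_le_epsilon)
  fix e :: real assume e: "0 < e"
  define \<alpha> where "\<alpha> = e / 2"
  have apos: "0 < \<alpha>" using e by (simp add: \<alpha>_def)
  have key: "t \<in> badset M P (Aw C A1 y n)" if t: "t \<in> V" "t < length (Aw C A1 y n)" for t n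
  proof -
    have "\<not> good M P (Aw C A1 y n) t"
    proof
      assume g: "good M P (Aw C A1 y n) t"
      hence le: "t + M \<le> length (Aw C A1 y n)" by (simp add: good_def)
      have "take M (drop t (Aw C A1 y n)) = map (\<lambda>i. Xp C A1 y (t + i)) [0..<M]"
        by (rule Xp_window[OF A1ne le])
      also have "\<dots> = map z [0..<M]" using t(1) V by auto
      finally show False using g notc by (simp add: good_def)
    qed
    thus ?thesis using t(2) by (simp add: badset_def)
  qed
  obtain n1 :: nat where n1: "real (3*M+3) / \<alpha> < n1" using reals_Archimedean2 by blast
  define n0 where "n0 = max n1 1"
  have n0: "1 \<le> n0" by (simp add: n0_def)
  have big: "real (3*M+3) \<le> \<alpha> * n0"
  proof -
    have "real (3*M+3) < \<alpha> * n1" using n1 apos by (simp add: divide_less_eq mult.commute)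
    also have "\<alpha> * n1 \<le> \<alpha> * n0" using apos by (intro mult_left_mono) (auto simp: n0_def)
    finally show ?thesis by simp
  qed
  define K where "K = 2 * (real (length (Aw C A1 y n0)) + 2 * M) + real (length (Aw C A1 y n0))"
  obtain L0 :: nat where L0: "K / \<alpha> < L0" using reals_Archimedean2 by blast
  define L1 where "L1 = max L0 1"
  have KL: "K \<le> \<alpha> * L1"
  proof -
    have "K < \<alpha> * L0" using L0 apos by (simp add: divide_less_eq mult.commute)
    also have "\<alpha> * L0 \<le> \<alpha> * L1" using apos by (intro mult_left_mono) (auto simp: L1_def)
    finally show ?thesis by simp
  qed
  have "upper_banach_density V \<le> e"
  proof (rule ubd_le[of L1])
    show "1 \<le> L1" by (simp add: L1_def)
    fix p l assume l: "L1 \<le> l"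
    define n where "n = max n0 (p + l + 1)"
    have nn0: "n0 \<le> n" by (simp add: n_def)
    have "p + l + 1 \<le> n" by (simp add: n_def)
    hence an: "p + l < length (Aw C A1 y n)" using Aw_len_ge[OF A1ne, of n C y] by linarith
    have "V \<inter> {p..<p+l} \<subseteq> badset M P (Aw C A1 y n) \<inter> {p..<p+l}"
      using key an by auto
    hence "card (V \<inter> {p..<p+l}) \<le> card (badset M P (Aw C A1 y n) \<inter> {p..<p+l})"
      by (intro card_mono) auto
    also have "real \<dots> \<le> \<alpha> * real (p + l - p) + K"
      using Aw_count[of P C y A1 \<alpha> n0 M n p "p + l", OF sh cC cY A1ne apos n0 big nn0] unfolding K_def by simp
    finally have c: "real (card (V \<inter> {p..<p+l})) \<le> \<alpha> * l + K" by simp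
    have lpos: "0 < real l" using l by (simp add: L1_def)
    have "K \<le> \<alpha> * l" using KL l apos by (smt (verit) mult_left_mono of_nat_mono)
    hence "real (card (V \<inter> {p..<p+l})) \<le> e * l" using c by (simp add: \<alpha>_def)
    thus "real (card (V \<inter> {p..<p+l})) / real l \<le> e" using lpos by (simp add: divide_le_eq)
  qed
  thus "upper_banach_density V \<le> 0 + e" by simp
qed


lemma P_in_omega:
  assumes A1ne: "A1 \<noteq> []" and z: "z \<in> P" and CP: "C ` {1..} = {w. w \<noteq> [] \<and> contained w P}"
    and e: "0 < e"
  shows "infinite {t. shiftd ((shift ^^ t) (Xp C A1 y)) z < e}"
proof -
  obtain M where M: "1 / 2 ^ M < e" using pow_small[OF e] by blast
  let ?x = "Xp C A1 y"
  let ?S = "{n. 1 \<le> n \<and> M \<le> length (C n) \<and> is_prefix (C n) z}"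
  have word: "\<exists>n. n \<in> ?S \<and> length (C n) = L" if L: "max M 1 \<le> L" for L
  proof -
    have ne: "map z [0..<L] \<noteq> []" using L by simp
    have pz: "is_prefix (map z [0..<L]) z" by (simp add: is_prefix_def)
    hence cz: "contained (map z [0..<L]) P" using z unfolding contained_def by blast
    have "map z [0..<L] \<in> C ` {1..}" unfolding CP using ne cz by (intro CollectI conjI)
    then obtain n where n0: "n \<in> {1..}" "map z [0..<L] = C n" by (rule imageE)
    hence n: "1 \<le> n" "C n = map z [0..<L]" by simp_all
    have "M \<le> length (C n)" using n(2) L by simp
    hence "n \<in> ?S" using n pz by (intro CollectI conjI) simp_all
    moreover have "length (C n) = L" using n(2) by simp
    ultimately show ?thesis by blast
  qed
  have infS: "infinite ?S"
  proof
    assume "finite ?S"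
    hence "finite (length ` C ` ?S)" by simp
    moreover have "{max M 1..} \<subseteq> length ` C ` ?S"
    proof
      fix L assume "L \<in> {max M 1..}"
      then obtain n where "n \<in> ?S" "length (C n) = L" using word by auto
      thus "L \<in> length ` C ` ?S" by (metis image_eqI)
    qed
    ultimately have "finite {max M 1..}" by (rule finite_subset[rotated])
    thus False using infinite_Ici by blast
  qed
  show ?thesis unfolding infinite_nat_iff_unbounded_le
  proof
    fix N
    obtain n where n: "N \<le> n" "n \<in> ?S" using infS unfolding infinite_nat_iff_unbounded_le by blast
    let ?t = "length (Aw C A1 y n)"
    have "shiftd ((shift ^^ ?t) ?x) z \<le> 1 / 2 ^ M"
    proof (rule shiftd_agree_le)
      fix i assume i: "i < M"
      hence il: "i < length (C n)" using n(2) by auto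
      have n1: "1 \<le> n" using n(2) by simp
      have "(shift ^^ ?t) ?x i = C n ! i" using Xp_occ_C[where C=C and y=y, OF A1ne n1 il] by (simp add: shift_pow)
      also have "\<dots> = z i" using n(2) il by (simp add: is_prefix_def)
      finally show "(shift ^^ ?t) ?x i = z i" .
    qed
    hence "shiftd ((shift ^^ ?t) ?x) z < e" using M by linarith
    moreover have "N \<le> ?t" using n(1) Aw_len_ge[OF A1ne, of n C y] by linarith
    ultimately show "\<exists>t\<ge>N. t \<in> {t. shiftd ((shift ^^ t) ?x) z < e}" by blast
  qed
qed

theorem proposition3p2:
  fixes k :: nat and P :: "(nat \<Rightarrow> nat) set"
    and C :: "nat \<Rightarrow> nat list" and A1 :: "nat list"
  assumes "k \<ge> 2"
    and "subshift k P" and "P \<noteq> fullshift k"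
    and "C ` {1..} = {w. w \<noteq> [] \<and> contained w P}"
    and "set A1 \<subseteq> {..<k}" and "\<not> contained A1 P"
    and "\<forall>y \<in> P. (\<lambda>n. real (length (C n))) \<in> o(\<lambda>n. real (length (Aw C A1 y n)))"
  shows "\<forall>y \<in> P. Tmap C A1 y \<in> fullshift k
           \<and> omega_B k (Tmap C A1 y) \<subseteq> P \<and> P \<subset> omega_sigma k (Tmap C A1 y)
           \<and> Tmap C A1 y \<in> Rec k - BR k"
proof
  fix y assume y: "y \<in> P"
  have Pne: "P \<noteq> {}" and Pfull: "P \<subseteq> fullshift k" and sh: "shift ` P \<subseteq> P"
    and closed: "\<And>z. z \<in> fullshift k \<Longrightarrow> (\<forall>e>0. \<exists>x\<in>P. shiftd x z < e) \<Longrightarrow> z \<in> P"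
    using assms(2) unfolding subshift_def by blast+
  have CP: "C ` {1..} = {w. w \<noteq> [] \<and> contained w P}" by (rule assms(4))
  have A1ne: "A1 \<noteq> []"
  proof
    assume "A1 = []"
    obtain u where "u \<in> P" using Pne by blast
    hence "contained [] P" by (auto simp: contained_def is_prefix_def)
    with \<open>A1 = []\<close> assms(6) show False by simp
  qed
  have cC: "contained (C j) P" if "1 \<le> j" for j
  proof -
    have "C j \<in> C ` {1..}" using that by simp
    thus ?thesis using CP by auto
  qed
  have cY: "contained (map y [0..<j]) P" for j
    using y by (auto simp: contained_def is_prefix_def)
  have yk: "y i < k" for i using y Pfull by (auto simp: fullshift_def)
  let ?x = "Xp C A1 y"
  have T: "Tmap C A1 y = ?x" by (rule Tmap_eq[OF A1ne])
  have xfull: "?x \<in> fullshift k"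
  proof -
    have "?x i < k" for i
    proof -
      have il: "i < length (Aw C A1 y (Suc i))" using Aw_len_ge[OF A1ne, of "Suc i" C y] by linarith
      have "set (Aw C A1 y (Suc i)) \<subseteq> {..<k}"
        using contained_lt[OF cC Pfull] yk by (intro set_Aw[OF assms(5)]) auto
      moreover have "Aw C A1 y (Suc i) ! i \<in> set (Aw C A1 y (Suc i))" by (rule nth_mem[OF il])
      ultimately have "Aw C A1 y (Suc i) ! i < k" by blast
      thus ?thesis by (simp only: Xp_def)
    qed
    thus ?thesis by (simp add: fullshift_def)
  qed
  have xnotP: "?x \<notin> P"
  proof
    assume "?x \<in> P"
    moreover have "is_prefix A1 ?x" using Xp_prefix[OF A1ne, of C y 1] by simp
    ultimately show False using assms(6) by (auto simp: contained_def)
  qed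
  have xself: "?x \<in> omega_sigma k ?x"
  proof -
    have "infinite {n. shiftd ((shift ^^ n) ?x) ?x < e}" if "0 < e" for e
      using self_return[OF A1ne that, of C y] by (rule infinite_super[rotated]) auto
    thus ?thesis using xfull by (simp add: omega_sigma_def)
  qed
  have Psub: "P \<subseteq> omega_sigma k ?x"
  proof
    fix z assume z: "z \<in> P"
    have "z \<in> fullshift k" using z Pfull by blast
    thus "z \<in> omega_sigma k ?x" using P_in_omega[OF A1ne z CP] by (simp add: omega_sigma_def)
  qed
  have Bsub: "omega_B k ?x \<subseteq> P"
  proof
    fix z assume zB: "z \<in> omega_B k ?x"
    hence zf: "z \<in> fullshift k" and pos: "\<And>e. 0 < e \<Longrightarrow> upper_banach_density (visits k ?x (sball k z e)) > 0"
      by (auto simp: omega_B_def)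
    show "z \<in> P"
    proof (rule ccontr)
      assume zn: "z \<notin> P"
      then obtain e0 where e0: "0 < e0" "\<forall>u\<in>P. \<not> shiftd u z < e0" using closed[OF zf] by blast
      obtain M where M: "1 / 2 ^ M < e0" using pow_small[OF e0(1)] by blast
      have notc: "\<not> contained (map z [0..<M]) P"
      proof
        assume "contained (map z [0..<M]) P"
        then obtain u where u: "u \<in> P" "is_prefix (map z [0..<M]) u" by (auto simp: contained_def)
        have "shiftd u z \<le> 1 / 2 ^ M" by (rule shiftd_agree_le) (use u(2) in \<open>auto simp: is_prefix_def\<close>)
        thus False using M e0(2) u(1) by force
      qed
      have V: "visits k ?x (sball k z (1 / 2 ^ M)) \<subseteq> {t. \<forall>i<M. ?x (t + i) = z i}"
      proof
        fix t assume "t \<in> visits k ?x (sball k z (1 / 2 ^ M))"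
        hence d: "shiftd ((shift ^^ t) ?x) z < 1 / 2 ^ M" by (simp add: visits_def sball_def)
        have "\<forall>i<M. ?x (t + i) = z i"
          using shiftd_lt_agree[OF d] by (simp add: shift_pow)
        thus "t \<in> {t. \<forall>i<M. ?x (t + i) = z i}" by simp
      qed
      have "upper_banach_density (visits k ?x (sball k z (1 / 2 ^ M))) \<le> 0"
        by (rule density_zero[OF sh cC cY A1ne notc V])
      moreover have "upper_banach_density (visits k ?x (sball k z (1 / 2 ^ M))) > 0"
        by (rule pos) simp
      ultimately show False by linarith
    qed
  qed
  have xRec: "?x \<in> Rec k"
  proof -
    have "visits k ?x (sball k ?x e) \<noteq> {}" if e: "0 < e" for e
    proof -
      have "infinite {t. 1 \<le> t \<and> shiftd ((shift ^^ t) ?x) ?x < e}" by (rule self_return[OF A1ne e])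
      then obtain t where t: "1 \<le> t" "shiftd ((shift ^^ t) ?x) ?x < e"
        using not_finite_existsD by blast
      have "(shift ^^ t) ?x \<in> fullshift k" by (rule shift_pow_full[OF xfull])
      hence "t \<in> visits k ?x (sball k ?x e)" using t by (simp add: visits_def sball_def)
      thus ?thesis by blast
    qed
    thus ?thesis using xfull by (simp add: Rec_def)
  qed
  have xBR: "?x \<notin> BR k"
  proof
    assume "?x \<in> BR k"
    hence "?x \<in> omega_B k ?x" by (simp add: BR_def omega_B_def)
    with Bsub xnotP show False by blast
  qed
  have "P \<subset> omega_sigma k ?x" using Psub xself xnotP by blast
  thus "Tmap C A1 y \<in> fullshift k
           \<and> omega_B k (Tmap C A1 y) \<subseteq> P \<and> P \<subset> omega_sigma k (Tmap C A1 y)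
           \<and> Tmap C A1 y \<in> Rec k - BR k"
    unfolding T using xfull Bsub xRec xBR by blast
qed

end
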